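(* Let $u,v\in\mathbb{N}$. Let $M$ be a finite $u\times v$ matrix which is image partition regular over $\mathbb{N}$, and let $N$ be an infinite ($\omega\times\omega$) matrix which is image partition regular near $0$ over a dense subsemigroup $S$ of $((0,\infty),+)$. Then the block matrix \[\begin{pmatrix} M & O\\ O & N\end{pmatrix}\] (where the $O$ denote zero matrices of the appropriate sizes) is image partition regular near $0$ over $S$.
   Context: Matrices have rational entries, and each row of an infinite matrix has only finitely many nonzero entries (so that $A\vec{x}$ is defined). A $u\times v$ matrix $A$ with $u,v\in\mathbb{N}$ is image partition regular over $\mathbb{N}$ if whenever $\mathbb{N}$ is partitioned into finitely many cells $\mathbb{N}=\bigcup_{i=1}^r C_i$, there exist $i$ and $\vec{x}\in\mathbb{N}^v$ such that all entries of $A\vec{x}$ lie in $C_i$. For $S$ a dense subsemigroup of $((0,\infty),+)$ and $A$ a $u\times v$ matrix with $u,v\in\mathbb{N}\cup\{\omega\}$, $A$ is image partition regular near $0$ over $S$ if whenever $S=\bigcup_{i=1}^r C_i$ is a finite partition and $\delta>0$, there exist $i\in\{1,\dots,r\}$ and $\vec{x}\in S^v$ such that all entries of $A\vec{x}$ lie in $C_i\cap(0,\delta)$. *)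

theory Defs
  imports Complex_Main
begin

text \<open>Matrices are functions nat => nat => rat. A finite u x v matrix uses only
indices i < u, j < v; an omega x omega matrix uses all indices and must be
row-finite.\<close>

definition row_finite :: "(nat \<Rightarrow> nat \<Rightarrow> rat) \<Rightarrow> bool" where
  "row_finite A \<longleftrightarrow> (\<forall>k. finite {j. A k j \<noteq> 0})"

definition omega_apply :: "(nat \<Rightarrow> nat \<Rightarrow> rat) \<Rightarrow> (nat \<Rightarrow> real) \<Rightarrow> nat \<Rightarrow> real" where
  "omega_apply A x k = (\<Sum>j\<in>{j. A k j \<noteq> 0}. real_of_rat (A k j) * x j)"

definition is_finite_partition :: "'a set \<Rightarrow> nat \<Rightarrow> (nat \<Rightarrow> 'a set) \<Rightarrow> bool" where
  "is_finite_partition X r C \<longleftrightarrow>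
     (\<Union>i<r. C i) = X \<and> (\<forall>i<r. \<forall>i'<r. i \<noteq> i' \<longrightarrow> C i \<inter> C i' = {})"

definition IPR_nat :: "nat \<Rightarrow> nat \<Rightarrow> (nat \<Rightarrow> nat \<Rightarrow> rat) \<Rightarrow> bool" where
  "IPR_nat u v M \<longleftrightarrow>
     (\<forall>r C. is_finite_partition {n::nat. 1 \<le> n} r C \<longrightarrow>
        (\<exists>i<r. \<exists>x :: nat \<Rightarrow> nat. (\<forall>j<v. 1 \<le> x j) \<and>
            (\<forall>k<u. (\<Sum>j<v. M k j * of_nat (x j)) \<in> of_nat ` C i)))"

definition dense_subsemigroup :: "real set \<Rightarrow> bool" where
  "dense_subsemigroup S \<longleftrightarrow>
     S \<subseteq> {0<..} \<and> (\<forall>x\<in>S. \<forall>y\<in>S. x + y \<in> S) \<and>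
     (\<forall>a b. 0 \<le> a \<and> a < b \<longrightarrow> (\<exists>s\<in>S. a < s \<and> s < b))"

definition IPR_near0_omega :: "real set \<Rightarrow> (nat \<Rightarrow> nat \<Rightarrow> rat) \<Rightarrow> bool" where
  "IPR_near0_omega S A \<longleftrightarrow>
     (\<forall>r C \<delta>. is_finite_partition S r C \<and> \<delta> > 0 \<longrightarrow>
        (\<exists>i<r. \<exists>x :: nat \<Rightarrow> real. (\<forall>j. x j \<in> S) \<and>
            (\<forall>k. omega_apply A x k \<in> C i \<inter> {0<..<\<delta>})))"

text \<open>The block matrix (M O; O N) as an omega x omega matrix: rows 0..u-1 and
columns 0..v-1 carry M, row u+k and column v+l carry N k l.\<close>
definition block_diag :: "nat \<Rightarrow> nat \<Rightarrow> (nat \<Rightarrow> nat \<Rightarrow> rat) \<Rightarrow> (nat \<Rightarrow> nat \<Rightarrow> rat)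
    \<Rightarrow> nat \<Rightarrow> nat \<Rightarrow> rat" where
  "block_diag u v M N k j =
     (if k < u then (if j < v then M k j else 0)
      else (if j < v then 0 else N (k - u) (j - v)))"

end

theory Submission
  imports Defs "HOL-Library.FuncSet"
begin

definition goodc :: "nat \<Rightarrow> nat \<Rightarrow> (nat \<Rightarrow> nat \<Rightarrow> rat) \<Rightarrow> nat \<Rightarrow> nat \<Rightarrow> (nat \<Rightarrow> nat) \<Rightarrow> bool" where
  "goodc u v M r m f \<longleftrightarrow> (\<exists>i<r. \<exists>x::nat \<Rightarrow> nat. (\<forall>j<v. 1 \<le> x j) \<and>
     (\<forall>k<u. \<exists>n. 1 \<le> n \<and> n \<le> m \<and> (\<Sum>j<v. M k j * of_nat (x j)) = of_nat n \<and> f n = i))"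

lemma goodc_mono: "goodc u v M r m f \<Longrightarrow> m \<le> m' \<Longrightarrow> goodc u v M r m' f"
proof -
  assume g: "goodc u v M r m f" and mm: "m \<le> m'"
  from g obtain i x where a: "i < r" "\<forall>j<v. 1 \<le> x j"
    and b: "\<forall>k<u. \<exists>n. 1 \<le> n \<and> n \<le> m \<and> (\<Sum>j<v. M k j * of_nat (x j)) = of_nat n \<and> f n = i"
    unfolding goodc_def by blast
  have "\<forall>k<u. \<exists>n. 1 \<le> n \<and> n \<le> m' \<and> (\<Sum>j<v. M k j * of_nat (x j)) = of_nat n \<and> f n = i"
  proof (intro allI impI)
    fix k assume "k < u"
    with b obtain n where "1 \<le> n \<and> n \<le> m \<and> (\<Sum>j<v. M k j * of_nat (x j)) = of_nat n \<and> f n = i" by blast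
    thus "\<exists>n. 1 \<le> n \<and> n \<le> m' \<and> (\<Sum>j<v. M k j * of_nat (x j)) = of_nat n \<and> f n = i"
      using mm by (intro exI[of _ n]) auto
  qed
  thus ?thesis unfolding goodc_def using a by blast
qed

lemma goodc_local: "goodc u v M r m f \<Longrightarrow> (\<And>q. q \<le> m \<Longrightarrow> g q = f q) \<Longrightarrow> goodc u v M r m g"
proof -
  assume g: "goodc u v M r m f" and e: "\<And>q. q \<le> m \<Longrightarrow> g q = f q"
  from g obtain i x where a: "i < r" "\<forall>j<v. 1 \<le> x j"
    and b: "\<forall>k<u. \<exists>n. 1 \<le> n \<and> n \<le> m \<and> (\<Sum>j<v. M k j * of_nat (x j)) = of_nat n \<and> f n = i"
    unfolding goodc_def by blast
  have "\<forall>k<u. \<exists>n. 1 \<le> n \<and> n \<le> m \<and> (\<Sum>j<v. M k j * of_nat (x j)) = of_nat n \<and> g n = i"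
  proof (intro allI impI)
    fix k assume "k < u"
    with b obtain n where "1 \<le> n \<and> n \<le> m \<and> (\<Sum>j<v. M k j * of_nat (x j)) = of_nat n \<and> f n = i" by blast
    thus "\<exists>n. 1 \<le> n \<and> n \<le> m \<and> (\<Sum>j<v. M k j * of_nat (x j)) = of_nat n \<and> g n = i"
      using e by (intro exI[of _ n]) auto
  qed
  thus ?thesis unfolding goodc_def using a by blast
qed

lemma compactness:
  assumes ipr: "IPR_nat u v M" and r: "1 \<le> r"
  shows "\<exists>m. \<forall>f. (\<forall>n. f n < r) \<longrightarrow> goodc u v M r m f"
proof (rule ccontr)
  assume "\<not> ?thesis"
  hence bad: "\<forall>m. \<exists>f. (\<forall>n. f n < r) \<and> \<not> goodc u v M r m f" by blast
  define B where "B m = {f. (\<forall>n. f n < r) \<and> \<not> goodc u v M r m f}" for m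
  have Bmono: "f \<in> B m'" if "f \<in> B m" "m' \<le> m" for f m m'
    using that goodc_mono unfolding B_def by blast
  define ext where "ext n g \<longleftrightarrow> (\<forall>m. \<exists>f\<in>B m. \<forall>q<n. f q = g q)" for n g
  have step: "\<exists>c<r. ext (Suc n) (g(n:=c))" if e: "ext n g" for n g
  proof (rule ccontr)
    assume "\<not> ?thesis"
    hence "\<forall>c. \<exists>m. c < r \<longrightarrow> (\<forall>f\<in>B m. \<not> (\<forall>q<Suc n. f q = (g(n:=c)) q))"
      unfolding ext_def by blast
    then obtain mm where mm: "\<And>c. c < r \<Longrightarrow> \<forall>f\<in>B (mm c). \<not> (\<forall>q<Suc n. f q = (g(n:=c)) q)"
      by metis
    define MM where "MM = Max (mm ` {..<r})"
    from e obtain f where f: "f \<in> B MM" "\<forall>q<n. f q = g q" unfolding ext_def by blast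
    have fr: "f n < r" using f(1) unfolding B_def by blast
    have "mm (f n) \<le> MM" unfolding MM_def using fr by auto
    hence "f \<in> B (mm (f n))" using Bmono f(1) by blast
    moreover have "\<forall>q<Suc n. f q = (g(n:=f n)) q" using f(2) by (auto simp: less_Suc_eq)
    ultimately show False using mm[OF fr] by blast
  qed
  have e0: "ext 0 g" for g using bad unfolding ext_def B_def by blast
  define H where "H = rec_nat (\<lambda>_. 0::nat) (\<lambda>n G. G(n := SOME c. c < r \<and> ext (Suc n) (G(n:=c))))"
  have H0: "H 0 = (\<lambda>_. 0)" and HS: "H (Suc n) = (H n)(n := SOME c. c < r \<and> ext (Suc n) ((H n)(n:=c)))" for n
    unfolding H_def by simp_all
  have Hext: "ext n (H n)" for n
  proof (induction n)
    case 0 show ?case using e0 by blast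
  next
    case (Suc n)
    from step[OF Suc] have "\<exists>c. c < r \<and> ext (Suc n) ((H n)(n:=c))" by blast
    from someI_ex[OF this] show ?case unfolding HS by blast
  qed
  have Hstable: "H (n + d) q = H n q" if "q < n" for n d q
    using that by (induction d) (auto simp: HS)
  define h where "h q = H (Suc q) q" for q
  have hH: "h q = H n q" if "q < n" for q n
  proof -
    from that obtain d where "n = Suc q + d" by (auto simp: less_iff_Suc_add)
    thus ?thesis unfolding h_def using Hstable[of q "Suc q" d] by simp
  qed
  have exth: "\<exists>f\<in>B m. \<forall>q<n. f q = h q" for m n
  proof -
    from Hext[of n] obtain f where f: "f \<in> B m" "\<forall>q<n. f q = H n q" unfolding ext_def by blast
    have "\<forall>q<n. f q = h q" using f(2) hH by simp
    thus ?thesis using f(1) by blast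
  qed
  have hr: "h q < r" for q
  proof -
    obtain f where f: "f \<in> B 0" "\<forall>q'<Suc q. f q' = h q'" using exth by blast
    have "f q = h q" using f(2) by simp
    moreover have "f q < r" using f(1) unfolding B_def by blast
    ultimately show ?thesis by simp
  qed
  have hbad: "\<not> goodc u v M r m h" for m
  proof
    assume g: "goodc u v M r m h"
    obtain f where "f \<in> B m" "\<forall>q<Suc m. f q = h q" using exth by blast
    thus False using goodc_local[OF g, of f] unfolding B_def by auto
  qed
  define C where "C i = {n::nat. 1 \<le> n \<and> h n = i}" for i
  have part: "is_finite_partition {n::nat. 1 \<le> n} r C"
    unfolding is_finite_partition_def C_def using hr by auto
  from ipr[unfolded IPR_nat_def, rule_format, OF part] obtain i x where
    i: "i < r" and x: "\<forall>j<v. 1 \<le> x j"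
    and s: "\<forall>k<u. (\<Sum>j<v. M k j * of_nat (x j)) \<in> of_nat ` C i" by blast
  from s have "\<forall>k. \<exists>n. k < u \<longrightarrow> n \<in> C i \<and> (\<Sum>j<v. M k j * of_nat (x j)) = of_nat n" by blast
  then obtain nn where nn: "\<And>k. k < u \<Longrightarrow> nn k \<in> C i \<and> (\<Sum>j<v. M k j * of_nat (x j)) = of_nat (nn k)"
    by metis
  define m where "m = (\<Sum>k<u. nn k)"
  have "\<forall>k<u. \<exists>n. 1 \<le> n \<and> n \<le> m \<and> (\<Sum>j<v. M k j * of_nat (x j)) = of_nat n \<and> h n = i"
  proof (intro allI impI)
    fix k assume k: "k < u"
    have "nn k \<le> m" unfolding m_def using k by (intro member_le_sum) auto
    thus "\<exists>n. 1 \<le> n \<and> n \<le> m \<and> (\<Sum>j<v. M k j * of_nat (x j)) = of_nat n \<and> h n = i"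
      using nn[OF k] unfolding C_def by blast
  qed
  hence "goodc u v M r m h" unfolding goodc_def using i x by blast
  thus False using hbad by blast
qed

lemma mult_in_S:
  assumes d: "dense_subsemigroup S" and y: "y \<in> S" and n: "1 \<le> n"
  shows "real n * y \<in> S"
  using n
proof (induction n)
  case 0 thus ?case by simp
next
  case (Suc n)
  show ?case
  proof (cases "n = 0")
    case True thus ?thesis using y by simp
  next
    case False
    hence "real n * y \<in> S" using Suc by simp
    hence "real n * y + y \<in> S" using d y unfolding dense_subsemigroup_def by blast
    thus ?thesis by (simp add: algebra_simps)
  qed
qed

lemma omega_top:
  assumes "k < u"
  shows "omega_apply (block_diag u v M N) X k = (\<Sum>j<v. real_of_rat (M k j) * X j)"
proof -
  have e: "{j. block_diag u v M N k j \<noteq> 0} = {j. j < v \<and> M k j \<noteq> 0}"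
    using assms unfolding block_diag_def by auto
  have "(\<Sum>j\<in>{j. j < v \<and> M k j \<noteq> 0}. real_of_rat (block_diag u v M N k j) * X j)
      = (\<Sum>j<v. real_of_rat (block_diag u v M N k j) * X j)"
    by (intro sum.mono_neutral_left) (auto simp: block_diag_def assms)
  also have "\<dots> = (\<Sum>j<v. real_of_rat (M k j) * X j)"
    by (intro sum.cong) (auto simp: block_diag_def assms)
  finally show ?thesis unfolding omega_apply_def e .
qed

lemma omega_bot:
  assumes "\<not> k < u"
  shows "omega_apply (block_diag u v M N) X k = omega_apply N (\<lambda>j. X (j + v)) (k - u)"
proof -
  have e: "{j. block_diag u v M N k j \<noteq> 0} = (\<lambda>j. j + v) ` {j. N (k - u) j \<noteq> 0}"
  proof (intro set_eqI iffI)
    fix j assume "j \<in> {j. block_diag u v M N k j \<noteq> 0}"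
    hence "\<not> j < v" "N (k - u) (j - v) \<noteq> 0" using assms unfolding block_diag_def by (auto split: if_splits)
    thus "j \<in> (\<lambda>j. j + v) ` {j. N (k - u) j \<noteq> 0}"
      by (intro image_eqI[of _ _ "j - v"]) auto
  qed (use assms in \<open>auto simp: block_diag_def\<close>)
  have "omega_apply (block_diag u v M N) X k
      = (\<Sum>j\<in>{j. N (k - u) j \<noteq> 0}. real_of_rat (block_diag u v M N k (j + v)) * X (j + v))"
    unfolding omega_apply_def e by (subst sum.reindex) (auto simp: inj_on_def)
  also have "\<dots> = omega_apply N (\<lambda>j. X (j + v)) (k - u)"
    unfolding omega_apply_def using assms by (intro sum.cong) (auto simp: block_diag_def)
  finally show ?thesis .
qed

lemma omega_scale: "omega_apply N (\<lambda>j. c * x j) k = c * omega_apply N x k"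
  unfolding omega_apply_def by (simp add: sum_distrib_left algebra_simps)

theorem theorem3p1:
  fixes u v :: nat and M N :: "nat \<Rightarrow> nat \<Rightarrow> rat" and S :: "real set"
  assumes "1 \<le> u" and "1 \<le> v"
    and "IPR_nat u v M"
    and "dense_subsemigroup S"
    and "row_finite N"
    and "IPR_near0_omega S N"
  shows "IPR_near0_omega S (block_diag u v M N)"
  unfolding IPR_near0_omega_def
proof (intro allI impI, elim conjE)
  fix r C and \<delta> :: real
  assume part: "is_finite_partition S r C" and dpos: "\<delta> > 0"
  note d = assms(4)
  have Spos: "\<And>y. y \<in> S \<Longrightarrow> y > 0" using d unfolding dense_subsemigroup_def by auto
  obtain s0 where "s0 \<in> S" using d unfolding dense_subsemigroup_def
    by (metis less_numeral_extra(1) order_refl)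
  hence r1: "1 \<le> r" using part unfolding is_finite_partition_def
    by (metis UN_E emptyE lessThan_0 less_one linorder_not_le)
  define c where "c y = (LEAST i. i < r \<and> y \<in> C i)" for y
  have cS: "c y < r \<and> y \<in> C (c y)" if "y \<in> S" for y
  proof -
    from that part obtain i where "i < r" "y \<in> C i" unfolding is_finite_partition_def by blast
    hence "\<exists>i. i < r \<and> y \<in> C i" by blast
    from LeastI_ex[OF this] show ?thesis unfolding c_def .
  qed
  obtain m0 where m0: "\<forall>f. (\<forall>n. f n < r) \<longrightarrow> goodc u v M r m0 f"
    using compactness[OF assms(3) r1] by blast
  define mm where "mm = Suc m0"
  have mmgood: "goodc u v M r mm f" if "\<forall>n. f n < r" for f
    using m0 that goodc_mono[of u v M r m0 f mm] unfolding mm_def by auto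
  define P where "P y = restrict (\<lambda>n. c (real n * y)) {1..mm}" for y
  define Q where "Q = P ` S"
  have QPi: "Q \<subseteq> PiE {1..mm} (\<lambda>_. {..<r})"
    unfolding Q_def P_def using cS mult_in_S[OF d] by auto
  have finQ: "finite Q" by (rule finite_subset[OF QPi]) (intro finite_PiE; simp)
  obtain hb where hb: "bij_betw hb {0..<card Q} Q" using ex_bij_betw_nat_finite[OF finQ] by blast
  define D where "D j = {y \<in> S. P y = hb j}" for j
  have partD: "is_finite_partition S (card Q) D"
    unfolding is_finite_partition_def
  proof (intro conjI allI impI)
    show "(\<Union>i<card Q. D i) = S"
    proof (intro set_eqI iffI)
      fix y assume y: "y \<in> S"
      hence "P y \<in> Q" unfolding Q_def by blast
      hence "P y \<in> hb ` {0..<card Q}" using hb unfolding bij_betw_def by simp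
      then obtain j where "j \<in> {0..<card Q}" "hb j = P y" by (metis imageE)
      hence "y \<in> D j" "j < card Q" using y unfolding D_def by auto
      thus "y \<in> (\<Union>i<card Q. D i)" by blast
    qed (auto simp: D_def)
  next
    fix i i' assume "i < card Q" "i' < card Q" "i \<noteq> i'"
    hence "hb i \<noteq> hb i'" using hb unfolding bij_betw_def inj_on_def by auto
    thus "D i \<inter> D i' = {}" unfolding D_def by auto
  qed
  have dm: "\<delta> / real mm > 0" using dpos unfolding mm_def by simp
  from assms(6)[unfolded IPR_near0_omega_def, rule_format, OF conjI[OF partD dm]]
  obtain j0 x2 where x2S: "\<forall>j. x2 j \<in> S"
    and x2: "\<forall>k. omega_apply N x2 k \<in> D j0 \<inter> {0<..<\<delta> / real mm}" by blast
  define y where "y k = omega_apply N x2 k" for k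
  have yS: "y k \<in> S" and yP: "P (y k) = P (y 0)" and yb: "y k < \<delta> / real mm" for k
    using x2[rule_format, of k] x2[rule_format, of 0] unfolding y_def D_def by auto
  define f where "f n = (if n \<in> {1..mm} then c (real n * y 0) else 0)" for n
  have fr: "\<forall>n. f n < r" unfolding f_def using cS mult_in_S[OF d yS] r1 by auto
  from mmgood[OF fr] obtain i x where i: "i < r" and x: "\<forall>j<v. 1 \<le> x j"
    and ent: "\<forall>k<u. \<exists>n. 1 \<le> n \<and> n \<le> mm \<and> (\<Sum>j<v. M k j * of_nat (x j)) = of_nat n \<and> f n = i"
    unfolding goodc_def by blast
  obtain n0 where n0: "1 \<le> n0" "n0 \<le> mm" "f n0 = i" using ent assms(1) by fastforce
  have key: "real n * y k \<in> C i \<inter> {0<..<\<delta>}" if n: "1 \<le> n" "n \<le> mm" "f n = i" for n k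
  proof -
    have "P (y k) n = P (y 0) n" using yP[of k] by (rule fun_cong)
    hence "c (real n * y k) = i" using n unfolding P_def f_def by auto
    hence "real n * y k \<in> C i" using cS[OF mult_in_S[OF d yS[of k] n(1)]] by metis
    moreover have "real n * y k > 0" using Spos[OF yS[of k]] n by simp
    moreover have "real n * y k < \<delta>"
    proof -
      have "real n * y k \<le> real mm * y k" using n Spos[OF yS[of k]] by (intro mult_right_mono) auto
      also have "\<dots> < real mm * (\<delta> / real mm)" using yb unfolding mm_def by (intro mult_strict_left_mono) auto
      also have "\<dots> = \<delta>" unfolding mm_def by simp
      finally show ?thesis .
    qed
    ultimately show ?thesis by auto
  qed
  define X where "X j = (if j < v then real (x j) * y 0 else real n0 * x2 (j - v))" for j
  show "\<exists>i<r. \<exists>x. (\<forall>j. x j \<in> S) \<and> (\<forall>k. omega_apply (block_diag u v M N) x k \<in> C i \<inter> {0<..<\<delta>})"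
  proof (intro exI conjI allI)
    show "i < r" by (rule i)
  next
    fix j show "X j \<in> S"
      unfolding X_def using mult_in_S[OF d yS] mult_in_S[OF d x2S[rule_format]] x n0 by auto
  next
    fix k
    show "omega_apply (block_diag u v M N) X k \<in> C i \<inter> {0<..<\<delta>}"
    proof (cases "k < u")
      case True
      then obtain n where n: "1 \<le> n" "n \<le> mm" and sm: "(\<Sum>j<v. M k j * of_nat (x j)) = of_nat n" and fn: "f n = i"
        using ent by blast
      have "omega_apply (block_diag u v M N) X k = (\<Sum>j<v. real_of_rat (M k j) * X j)"
        by (rule omega_top[OF True])
      also have "\<dots> = (\<Sum>j<v. real_of_rat (M k j) * real (x j)) * y 0"
        unfolding X_def sum_distrib_right by (intro sum.cong) auto
      also have "(\<Sum>j<v. real_of_rat (M k j) * real (x j)) = real_of_rat (\<Sum>j<v. M k j * of_nat (x j))"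
        by (simp add: of_rat_sum of_rat_mult)
      also have "\<dots> = real n" unfolding sm by simp
      finally show ?thesis using key[OF n fn, of 0] by simp
    next
      case False
      have "omega_apply (block_diag u v M N) X k = omega_apply N (\<lambda>j. X (j + v)) (k - u)"
        by (rule omega_bot[OF False])
      also have "(\<lambda>j. X (j + v)) = (\<lambda>j. real n0 * x2 j)" unfolding X_def by auto
      also have "omega_apply N (\<lambda>j. real n0 * x2 j) (k - u) = real n0 * y (k - u)"
        unfolding y_def by (rule omega_scale)
      finally show ?thesis using key[OF n0, of "k - u"] by simp
    qed
  qed
qed

end
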